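(* Let $\theta>0$ be such that $\Lambda^*_\nu(\theta)=\ln 2$. Then for all $0\le x\le 1$, $$\Lambda^*_\nu(\theta x)\ge (\ln\cosh)^*(x)=\tfrac12\big[(1+x)\ln(1+x)+(1-x)\ln(1-x)\big].$$
   Context: $\nu$ is the symmetric exponential distribution on $\mathbb{R}$ with density $\frac12 e^{-|x|}$, and its Cramer transform is $\Lambda^*_\nu(x)=\sup_y\{xy-\ln\int e^{yz}d\nu(z)\}=\sqrt{x^2+1}-1-\ln\frac{\sqrt{x^2+1}+1}{2}$. $(\ln\cosh)^*$ is the Legendre transform $f^*(x)=\sup_y\{xy-f(y)\}$ of $\ln\cosh$; at $x=1$ it equals $\ln 2$ (with $0\ln 0=0$). *)

theory Defs
  imports "HOL-Analysis.Analysis"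
begin

definition nu :: "real measure" where
  "nu = density lborel (\<lambda>z. ennreal (exp (- \<bar>z\<bar>) / 2))"

text \<open>Values of y with infinite Laplace transform contribute minus infinity to the
  supremum, so they are excluded (only y with exp(y z) integrable are taken).\<close>
definition cramer_nu :: "real \<Rightarrow> real" where
  "cramer_nu x = Sup {x * y - ln (\<integral>z. exp (y * z) \<partial>nu) | y. integrable nu (\<lambda>z. exp (y * z))}"

definition lncosh_star :: "real \<Rightarrow> real" where
  "lncosh_star x = Sup {x * y - ln (cosh y) | y. True}"

end

theory Submission imports Defs begin

definition F :: "real \<Rightarrow> real \<Rightarrow> real" where
  "F y z = exp (- \<bar>z\<bar>) / 2 * exp (y * z)"

lemma half_line:
  assumes "y < 1"
  shows "has_bochner_integral lborel (\<lambda>z. indicator {0..} z *\<^sub>R F y z) (1 / (2 * (1 - y)))"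
proof -
  let ?g = "\<lambda>z::real. if z \<in> {0..} then exp (- (1 - y) * z) / 2 else 0"
  have h: "((\<lambda>z. exp (- (1 - y) * z) / 2) has_integral (1 / (2 * (1 - y)))) {0..}"
    using has_integral_mult_left[OF has_integral_exp_minus_to_infinity[of "1-y" 0], of "1/2"] assms
    by (simp add: divide_simps mult.commute)
  have eq: "(\<lambda>z. indicator {0..} z *\<^sub>R F y z) = ?g"
    by (auto simp: F_def fun_eq_iff indicator_def mult_exp_exp algebra_simps)
  have "(?g has_integral (1 / (2 * (1 - y)))) UNIV"
    using h by (subst has_integral_restrict_UNIV)
  then have "integral\<^sup>N lborel ?g = ennreal (1 / (2 * (1 - y)))"
    by (intro nn_integral_has_integral_lborel) auto
  then show ?thesis unfolding eq
    by (intro has_bochner_integral_nn_integral) (use assms in auto)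
qed

lemma F_neg: "F y (- z) = F (- y) z"
  by (simp add: F_def)

lemma F_int:
  assumes "\<bar>y\<bar> < 1"
  shows "has_bochner_integral lborel (F y) (1 / (1 - y\<^sup>2))"
proof -
  have ind: "\<And>x::real. indicator {..0} (- x) = indicator {0..} x"
    by (auto split: split_indicator)
  have h1: "has_bochner_integral lborel (\<lambda>z. indicator {0..} z *\<^sub>R F y z) (1 / (2 * (1 - y)))"
    using assms by (intro half_line) auto
  have h2': "has_bochner_integral lborel (\<lambda>z. indicator {0..} z *\<^sub>R F (-y) z) (1 / (2 * (1 - (-y))))"
    using assms by (intro half_line) auto
  have h2: "has_bochner_integral lborel (\<lambda>z. indicator {..0} z *\<^sub>R F y z) (1 / (2 * (1 + y)))"
    by (subst lborel_has_bochner_integral_real_affine_iff[where c="-1" and t=0])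
       (use h2' in \<open>auto simp: ind F_neg\<close>)
  have "has_bochner_integral lborel (\<lambda>z. indicator {0..} z *\<^sub>R F y z + indicator {..0} z *\<^sub>R F y z)
     (1 / (2 * (1 - y)) + 1 / (2 * (1 + y)))"
    by (rule has_bochner_integral_add[OF h1 h2])
  then have "has_bochner_integral lborel (F y) (1 / (2 * (1 - y)) + 1 / (2 * (1 + y)))"
    by (rule has_bochner_integral_discrete_difference[where X="{0}", THEN iffD1, rotated 4])
       (auto split: split_indicator simp: F_def)
  moreover have "1 / (2 * (1 - y)) + 1 / (2 * (1 + y)) = 1 / (1 - y\<^sup>2)"
  proof -
    have a: "-1 < y" "y < 1" using assms by auto
    then have "(1 - y) * (1 + y) > 0" by simp
    then have "1 - y * y > 0" by (simp add: algebra_simps)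
    then show ?thesis using a by (simp add: field_simps power2_eq_square)
  qed
  ultimately show ?thesis by simp
qed

lemma F_meas[measurable]: "F y \<in> borel_measurable borel"
  unfolding F_def by measurable

lemma F_not_pos:
  assumes "integrable lborel (F y)" "y \<ge> 1"
  shows False
proof -
  have i1: "integrable lborel (\<lambda>z. indicator {0..} z *\<^sub>R F y z)"
    using assms(1) by (intro integrable_mult_indicator) auto
  define I where "I = (\<integral>z. indicator {0..} z *\<^sub>R F y z \<partial>lborel)"
  define n where "n = 2 * \<bar>I\<bar> + 1"
  have i2: "integrable lborel (\<lambda>z. indicator {0..n} z / (2::real))"
    by (intro integrable_divide integrable_real_indicator) (auto simp: emeasure_lborel_Icc_eq)
  have "(\<integral>z. indicator {0..n} z / (2::real) \<partial>lborel) \<le> I"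
    unfolding I_def
  proof (rule integral_mono[OF i2 i1])
    fix z :: real
    have "1 \<le> exp ((y - 1) * z)" if "z \<ge> 0" using that assms(2) by simp
    then show "indicator {0..n} z / 2 \<le> indicator {0..} z *\<^sub>R F y z"
      by (auto simp: F_def indicator_def mult_exp_exp algebra_simps)
  qed
  moreover have "(\<integral>z. indicator {0..n} z / (2::real) \<partial>lborel) = n / 2"
    unfolding n_def by (simp add: measure_lborel_Icc)
  moreover have "(2 * \<bar>I\<bar> + 1) / 2 = \<bar>I\<bar> + 1/2" by simp
  ultimately show False using abs_ge_self[of I] unfolding n_def by linarith
qed

lemma F_not:
  assumes "integrable lborel (F y)"
  shows "\<bar>y\<bar> < 1"
proof (rule ccontr)
  assume "\<not> \<bar>y\<bar> < 1"
  then have "y \<ge> 1 \<or> -y \<ge> 1" by linarith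
  moreover have "integrable lborel (F (-y))"
  proof -
    have "integrable lborel (\<lambda>z. F y (0 + (-1) * z))"
      using assms lborel_integrable_real_affine_iff[of "-1" "F y" 0] by simp
    then show ?thesis by (simp add: F_neg)
  qed
  ultimately show False using F_not_pos assms by blast
qed

lemma nu_int_iff: "integrable nu (\<lambda>z. exp (y * z)) \<longleftrightarrow> \<bar>y\<bar> < 1"
proof -
  have "integrable nu (\<lambda>z. exp (y * z)) \<longleftrightarrow> integrable lborel (\<lambda>z. (exp (- \<bar>z\<bar>) / 2) *\<^sub>R exp (y * z))"
    unfolding nu_def using integrable_density[where f="\<lambda>z. exp (y * z)" and M=lborel and g="\<lambda>z. exp (- \<bar>z\<bar>) / 2"] by simp
  also have "\<dots> \<longleftrightarrow> integrable lborel (F y)"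
    by (simp add: F_def[abs_def])
  finally show ?thesis
    using F_not F_int integrable.intros by blast
qed

lemma nu_integral: "\<bar>y\<bar> < 1 \<Longrightarrow> (\<integral>z. exp (y * z) \<partial>nu) = 1 / (1 - y\<^sup>2)"
proof -
  assume a: "\<bar>y\<bar> < 1"
  have "(\<integral>z. exp (y * z) \<partial>nu) = (\<integral>z. (exp (- \<bar>z\<bar>) / 2) *\<^sub>R exp (y * z) \<partial>lborel)"
    unfolding nu_def using integral_density[where f="\<lambda>z. exp (y * z)" and M=lborel and g="\<lambda>z. exp (- \<bar>z\<bar>) / 2"] by simp
  also have "\<dots> = integral\<^sup>L lborel (F y)"
    by (simp add: F_def[abs_def])
  also have "\<dots> = 1 / (1 - y\<^sup>2)"
    using F_int[OF a] by (simp add: has_bochner_integral_integral_eq)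
  finally show ?thesis .
qed

lemma sq_lt1: "\<bar>y::real\<bar> < 1 \<Longrightarrow> 0 < 1 - y\<^sup>2 \<and> 1 - y\<^sup>2 \<le> 1"
proof -
  assume "\<bar>y\<bar> < 1"
  then have "y\<^sup>2 < 1" by (simp add: abs_square_less_1)
  then show ?thesis by simp
qed

definition SS :: "real \<Rightarrow> real set" where
  "SS x = {x * y + ln (1 - y\<^sup>2) | y. \<bar>y\<bar> < 1}"

lemma cramer_eq: "cramer_nu x = Sup (SS x)"
proof -
  have "{x * y - ln (\<integral>z. exp (y * z) \<partial>nu) | y. integrable nu (\<lambda>z. exp (y * z))} = SS x"
  proof -
    have *: "x * y - ln (\<integral>z. exp (y * z) \<partial>nu) = x * y + ln (1 - y\<^sup>2)" if "\<bar>y\<bar> < 1" for y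
      using that sq_lt1[OF that] by (simp add: nu_integral ln_div)
    show ?thesis unfolding SS_def nu_int_iff
    proof (intro equalityI subsetI)
      fix s assume "s \<in> {x * y - ln (\<integral>z. exp (y * z) \<partial>nu) |y. \<bar>y\<bar> < 1}"
      then obtain y where "\<bar>y\<bar> < 1" "s = x * y - ln (\<integral>z. exp (y * z) \<partial>nu)" by blast
      then show "s \<in> {x * y + ln (1 - y\<^sup>2) |y. \<bar>y\<bar> < 1}" using * by blast
    next
      fix s assume "s \<in> {x * y + ln (1 - y\<^sup>2) |y. \<bar>y\<bar> < 1}"
      then obtain y where y: "\<bar>y\<bar> < 1" "s = x * y + ln (1 - y\<^sup>2)" by blast
      then have "s = x * y - ln (\<integral>z. exp (y * z) \<partial>nu)" using *[OF y(1)] by simp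
      then show "s \<in> {x * y - ln (\<integral>z. exp (y * z) \<partial>nu) |y. \<bar>y\<bar> < 1}" using y(1) by blast
    qed
  qed
  then show ?thesis unfolding cramer_nu_def by simp
qed

lemma SS_bdd: "bdd_above (SS x)"
proof (rule bdd_aboveI)
  fix s assume "s \<in> SS x"
  then obtain y where y: "\<bar>y\<bar> < 1" "s = x * y + ln (1 - y\<^sup>2)" unfolding SS_def by auto
  have "ln (1 - y\<^sup>2) \<le> 0" using sq_lt1[OF y(1)] by simp
  moreover have "x * y \<le> \<bar>x\<bar>"
  proof -
    have "x * y \<le> \<bar>x * y\<bar>" by simp
    also have "\<dots> = \<bar>x\<bar> * \<bar>y\<bar>" by (simp add: abs_mult)
    also have "\<dots> \<le> \<bar>x\<bar>" using y(1) by (simp add: mult_left_le)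
    finally show ?thesis .
  qed
  ultimately show "s \<le> \<bar>x\<bar>" using y by simp
qed

lemma cramer_ge: "\<bar>y\<bar> < 1 \<Longrightarrow> x * y + ln (1 - y\<^sup>2) \<le> cramer_nu x"
  unfolding cramer_eq by (rule cSup_upper[OF _ SS_bdd]) (auto simp: SS_def)

lemma cramer_le: "(\<And>y. \<bar>y\<bar> < 1 \<Longrightarrow> x * y + ln (1 - y\<^sup>2) \<le> M) \<Longrightarrow> cramer_nu x \<le> M"
  unfolding cramer_eq by (rule cSup_least) (auto simp: SS_def intro!: exI[of _ 0])

lemma phi_max:
  fixes c y \<theta> :: real
  assumes c: "0 < c" "c < 1" and th: "\<theta> = 2 * c / (1 - c\<^sup>2)" and y: "\<bar>y\<bar> < 1"
  shows "\<theta> * y + ln (1 - y\<^sup>2) \<le> \<theta> * c + ln (1 - c\<^sup>2)"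
proof -
  have y1: "0 < 1 - y" "0 < 1 + y" using y by auto
  have c1: "0 < 1 - c" "0 < 1 + c" using c by auto
  have a: "ln ((1 - y) / (1 - c)) \<le> (1 - y) / (1 - c) - 1"
    using y1 c1 by (intro ln_le_minus_one) simp
  have b: "ln ((1 + y) / (1 + c)) \<le> (1 + y) / (1 + c) - 1"
    using y1 c1 by (intro ln_le_minus_one) simp
  have ly: "ln (1 - y\<^sup>2) = ln (1 - y) + ln (1 + y)"
  proof -
    have "1 - y\<^sup>2 = (1 - y) * (1 + y)" by (simp add: algebra_simps power2_eq_square)
    then show ?thesis using y1 by (simp add: ln_mult)
  qed
  have lc: "ln (1 - c\<^sup>2) = ln (1 - c) + ln (1 + c)"
  proof -
    have "1 - c\<^sup>2 = (1 - c) * (1 + c)" by (simp add: algebra_simps power2_eq_square)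
    then show ?thesis using c1 by (simp add: ln_mult)
  qed
  have e: "(1 - y) / (1 - c) - 1 + ((1 + y) / (1 + c) - 1) = \<theta> * (c - y)"
  proof -
    have "1 - c\<^sup>2 = (1 - c) * (1 + c)" by (simp add: algebra_simps power2_eq_square)
    then show ?thesis using c1 unfolding th by (simp add: field_simps)
  qed
  show ?thesis using a b e y1 c1 unfolding ly lc by (simp add: ln_div algebra_simps)
qed

lemma ln3_gt1: "1 < ln (3::real)"
proof -
  have "exp 1 < (3::real)" using e_less_272 by simp
  then have "ln (exp 1) < ln (3::real)" by (subst ln_less_cancel_iff) auto
  then show ?thesis by simp
qed

lemma q_ge3:
  fixes q :: real
  assumes "2 \<le> q" "ln q \<le> q - 2"
  shows "3 \<le> q"
proof (rule ccontr)
  assume "\<not> 3 \<le> q"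
  then have q3: "q < 3" by simp
  have "ln (3 / q) \<le> 3 / q - 1" using assms by (intro ln_le_minus_one) simp
  then have "ln 3 - ln q \<le> 3 / q - 1" using assms by (simp add: ln_div)
  moreover have "3 / q - 1 \<le> 2 - q + 1"
  proof -
    have "(q - 1) * (q - 3) \<le> 0" using assms q3 by (intro mult_nonneg_nonpos) auto
    then have "3 \<le> (4 - q) * q" by (simp add: algebra_simps)
    then have "3 / q \<le> 4 - q" using assms by (simp add: pos_divide_le_eq)
    then show ?thesis by simp
  qed
  ultimately show False using assms ln3_gt1 by linarith
qed

lemma sinh_ge: "0 \<le> v \<Longrightarrow> v \<le> sinh (v::real)"
proof -
  assume v: "0 \<le> v"
  have "(\<lambda>t. sinh t - t) 0 \<le> (\<lambda>t. sinh t - t) v"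
    by (rule DERIV_nonneg_imp_nondecreasing[OF v])
       (auto intro!: exI derivative_eq_intros simp: cosh_real_ge_1)
  then show ?thesis by simp
qed

lemma cosh_quad0: "0 \<le> v \<Longrightarrow> 1 + v\<^sup>2 / 2 \<le> cosh (v::real)"
proof -
  assume v: "0 \<le> v"
  have "(\<lambda>t. cosh t - t\<^sup>2 / 2) 0 \<le> (\<lambda>t. cosh t - t\<^sup>2 / 2) v"
    by (rule DERIV_nonneg_imp_nondecreasing[OF v])
       (auto intro!: exI derivative_eq_intros simp: sinh_ge)
  then show ?thesis by simp
qed

lemma cosh_quad: "1 + v\<^sup>2 / 2 \<le> cosh (v::real)"
proof (cases "0 \<le> v")
  case True then show ?thesis by (rule cosh_quad0)
next
  case False
  then have "1 + (-v)\<^sup>2 / 2 \<le> cosh (-v)" by (intro cosh_quad0) simp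
  then show ?thesis by simp
qed

lemma cosh_alt: "cosh (y::real) = exp y * (1 + exp (- 2 * y)) / 2"
proof -
  have "exp y * exp (- 2 * y) = exp (- y)" by (simp add: mult_exp_exp)
  then show ?thesis by (simp add: cosh_field_def algebra_simps)
qed

lemma ln_cosh_alt: "ln (cosh (y::real)) = y + ln (1 + exp (- 2 * y)) - ln 2"
proof -
  have "0 < 1 + exp (- 2 * y)" by (simp add: add_pos_pos)
  then show ?thesis unfolding cosh_alt by (simp add: ln_mult ln_div)
qed

definition g :: "real \<Rightarrow> real" where
  "g x = ((1 + x) * ln (1 + x) + (1 - x) * ln (1 - x)) / 2"

lemma lncosh_le:
  fixes x y :: real
  assumes x: "0 \<le> x" "x \<le> 1"
  shows "x * y - ln (cosh y) \<le> g x"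
proof -
  define A where "A = exp y"
  define B where "B = exp (- y)"
  define C where "C = cosh y"
  have C: "C = (A + B) / 2" "0 < C" "0 < A" "0 < B"
    unfolding A_def B_def C_def by (auto simp: cosh_field_def intro: add_pos_pos)
  have i1: "(1 + x) / 2 * (y - ln (1 + x) - ln C) \<le> A / (2 * C) - (1 + x) / 2"
  proof -
    have "ln (A / ((1 + x) * C)) \<le> A / ((1 + x) * C) - 1"
      using C x by (intro ln_le_minus_one) simp
    moreover have "ln (A / ((1 + x) * C)) = y - ln (1 + x) - ln C"
      using C x by (simp add: ln_div ln_mult A_def)
    ultimately have "y - ln (1 + x) - ln C \<le> A / ((1 + x) * C) - 1" by simp
    then have "(1 + x) / 2 * (y - ln (1 + x) - ln C) \<le> (1 + x) / 2 * (A / ((1 + x) * C) - 1)"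
      using x by (intro mult_left_mono) auto
    also have "\<dots> = A / (2 * C) - (1 + x) / 2"
    proof -
      have "0 < C + C * x" using x C(2) by (simp add: add_pos_nonneg)
      then show ?thesis using x C(2) by (simp add: field_simps)
    qed
    finally show ?thesis .
  qed
  have i2: "(1 - x) / 2 * (- y - ln (1 - x) - ln C) \<le> B / (2 * C) - (1 - x) / 2"
  proof (cases "x = 1")
    case True then show ?thesis using C by simp
  next
    case False
    then have x1: "x < 1" using x by simp
    have "ln (B / ((1 - x) * C)) \<le> B / ((1 - x) * C) - 1"
      using C x1 by (intro ln_le_minus_one) simp
    moreover have "ln (B / ((1 - x) * C)) = - y - ln (1 - x) - ln C"
      using C x1 by (simp add: ln_div ln_mult B_def)
    ultimately have "- y - ln (1 - x) - ln C \<le> B / ((1 - x) * C) - 1" by simp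
    then have "(1 - x) / 2 * (- y - ln (1 - x) - ln C) \<le> (1 - x) / 2 * (B / ((1 - x) * C) - 1)"
      using x1 by (intro mult_left_mono) auto
    also have "\<dots> = B / (2 * C) - (1 - x) / 2" using x1 C(2) by (simp add: field_simps)
    finally show ?thesis .
  qed
  have s: "A / (2 * C) + B / (2 * C) = 1"
  proof -
    have "A / (2 * C) + B / (2 * C) = (A + B) / (2 * C)" by (simp add: add_divide_distrib)
    also have "\<dots> = 1" using C(1,2) by simp
    finally show ?thesis .
  qed
  have "x * y - ln C - g x = (1 + x) / 2 * (y - ln (1 + x) - ln C) + (1 - x) / 2 * (- y - ln (1 - x) - ln C)"
    unfolding g_def by (simp add: field_simps)
  also have "\<dots> \<le> 0"
  proof -
    have "(1 + x) / 2 + (1 - x) / 2 = (1::real)" by (simp add: field_simps)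
    then show ?thesis using i1 i2 s by linarith
  qed
  finally show ?thesis unfolding C_def by simp
qed

lemma lncosh_attain:
  fixes x :: real
  assumes x: "0 \<le> x" "x < 1"
  shows "x * ((ln (1 + x) - ln (1 - x)) / 2) - ln (cosh ((ln (1 + x) - ln (1 - x)) / 2)) = g x"
proof -
  define y where "y = (ln (1 + x) - ln (1 - x)) / 2"
  have "exp (- 2 * y) = exp (ln (1 - x) - ln (1 + x))" unfolding y_def by (simp add: field_simps)
  also have "\<dots> = (1 - x) / (1 + x)" using x by (simp add: exp_diff)
  finally have e: "exp (- 2 * y) = (1 - x) / (1 + x)" .
  have "1 + exp (- 2 * y) = 2 / (1 + x)" unfolding e using x by (simp add: field_simps)
  then have "ln (cosh y) = y - ln (1 + x)" unfolding ln_cosh_alt using x by (simp add: ln_div)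
  then have "x * y - ln (cosh y) = (x - 1) * y + ln (1 + x)" by (simp add: algebra_simps)
  also have "\<dots> = g x" unfolding y_def g_def by (simp add: field_simps)
  finally show ?thesis unfolding y_def .
qed

lemma g_one: "g 1 = ln 2"
  unfolding g_def by simp

lemma lncosh_star_eq:
  fixes x :: real
  assumes x: "0 \<le> x" "x \<le> 1"
  shows "lncosh_star x = g x"
  unfolding lncosh_star_def
proof (rule cSup_eq_non_empty)
  show "{x * y - ln (cosh y) |y. True} \<noteq> {}" by auto
next
  fix s assume "s \<in> {x * y - ln (cosh y) |y. True}"
  then show "s \<le> g x" using lncosh_le[OF x] by auto
next
  fix b assume b: "\<And>s. s \<in> {x * y - ln (cosh y) |y. True} \<Longrightarrow> s \<le> b"
  show "g x \<le> b"
  proof (cases "x < 1")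
    case True
    let ?y = "(ln (1 + x) - ln (1 - x)) / 2"
    have "x * ?y - ln (cosh ?y) \<le> b" by (rule b) blast
    then show ?thesis using lncosh_attain[OF x(1) True] by simp
  next
    case False
    then have x1: "x = 1" using x by simp
    show ?thesis
    proof (rule ccontr)
      assume "\<not> g x \<le> b"
      then have bl: "b < ln 2" using x1 g_one by simp
      define d where "d = (ln 2 - b) / 2"
      have d0: "0 < d" using bl unfolding d_def by simp
      define \<delta> where "\<delta> = exp d - 1"
      have \<delta>0: "0 < \<delta>" unfolding \<delta>_def using d0 by simp
      define y where "y = - ln \<delta> / 2"
      have e: "exp (- 2 * y) = \<delta>" unfolding y_def using \<delta>0 by simp
      have l: "ln (1 + \<delta>) = d" unfolding \<delta>_def by simp
      have "ln (cosh y) = y + d - ln 2" unfolding ln_cosh_alt e l by simp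
      then have "x * y - ln (cosh y) = ln 2 - d" using x1 by simp
      moreover have "x * y - ln (cosh y) \<le> b" by (rule b) blast
      ultimately show False using bl unfolding d_def by (simp add: field_simps)
    qed
  qed
qed

theorem lemma6:
  fixes \<theta> :: real
  assumes "\<theta> > 0" and "cramer_nu \<theta> = ln 2"
  shows "\<forall>x::real. 0 \<le> x \<and> x \<le> 1 \<longrightarrow>
           cramer_nu (\<theta> * x) \<ge> lncosh_star x \<and>
           lncosh_star x = ((1 + x) * ln (1 + x) + (1 - x) * ln (1 - x)) / 2"
proof (intro allI impI)
  fix x :: real
  assume x: "0 \<le> x \<and> x \<le> 1"
  then have x0: "0 \<le> x" and x1: "x \<le> 1" by auto
  have th: "0 < \<theta>" using assms(1) .
  define s where "s = sqrt (\<theta>\<^sup>2 + 1)"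
  have s2: "s\<^sup>2 = \<theta>\<^sup>2 + 1" unfolding s_def by simp
  have s0: "0 \<le> s" unfolding s_def by simp
  have s1: "1 < s"
  proof -
    have "1 < \<theta>\<^sup>2 + 1" using th by simp
    then show ?thesis unfolding s_def by (simp add: real_less_rsqrt)
  qed
  have s3: "s < \<theta> + 1"
  proof -
    have e: "(\<theta> + 1)\<^sup>2 = \<theta>\<^sup>2 + 1 + 2 * \<theta>" by (simp add: power2_eq_square algebra_simps)
    show ?thesis
    proof (rule ccontr)
      assume "\<not> s < \<theta> + 1"
      then have "\<theta> + 1 \<le> s" by simp
      then have "(\<theta> + 1)\<^sup>2 \<le> s\<^sup>2" using th by (intro power_mono) auto
      then show False using e s2 th by linarith
    qed
  qed
  define c where "c = (s - 1) / \<theta>"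
  have c0: "0 < c" unfolding c_def using s1 th by simp
  have c1: "c < 1" unfolding c_def using s3 th by (simp add: divide_less_eq)
  have ct: "c * \<theta> = s - 1" unfolding c_def using th by simp
  have p0: "0 < 1 - c\<^sup>2"
  proof -
    have "c\<^sup>2 < 1" using c0 c1 by (simp add: power_less_one_iff abs_square_less_1)
    then show ?thesis by simp
  qed
  have key: "\<theta> * (1 - c\<^sup>2) = 2 * c"
  proof -
    have "\<theta> * (\<theta> * (1 - c\<^sup>2) - 2 * c) = \<theta>\<^sup>2 - (c * \<theta>)\<^sup>2 - 2 * (c * \<theta>)"
      by (simp add: algebra_simps power2_eq_square)
    also have "\<dots> = 0" unfolding ct using s2 by (simp add: algebra_simps power2_eq_square)
    finally show ?thesis using th by simp
  qed
  have thc: "\<theta> = 2 * c / (1 - c\<^sup>2)" using key p0 by (simp add: field_simps)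
  define q where "q = 2 / (1 - c\<^sup>2)"
  have q2: "2 \<le> q" unfolding q_def using p0 by (simp add: le_divide_eq)
  have qpos: "0 < q" using q2 by simp
  have pq: "1 - c\<^sup>2 = 2 / q" unfolding q_def using p0 by simp
  have thq: "\<theta> = q * c" unfolding thc q_def by simp
  have csq: "c\<^sup>2 = 1 - 2 / q" using pq by simp
  have thc2: "\<theta> * c = q - 2" unfolding thq using csq qpos by (simp add: power2_eq_square field_simps)
  have cmax: "cramer_nu \<theta> \<le> \<theta> * c + ln (1 - c\<^sup>2)"
    by (rule cramer_le) (rule phi_max[OF c0 c1 thc])
  have "ln 2 \<le> q - 2 + (ln 2 - ln q)"
    using cmax assms(2) unfolding thc2 pq using qpos by (simp add: ln_div)
  then have q3: "3 \<le> q" using q2 by (intro q_ge3) auto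
  have th2: "\<theta>\<^sup>2 = q * (q - 2)"
  proof -
    have h: "c\<^sup>2 * q = q - 2" using csq qpos by (simp add: field_simps)
    have "\<theta>\<^sup>2 = q * (c\<^sup>2 * q)" unfolding thq by (simp add: power2_eq_square algebra_simps)
    then show ?thesis using h by simp
  qed
  have hmax: "ln 2 \<le> \<theta> * c + ln (1 - c\<^sup>2)"
    using cmax assms(2) by simp

  have main: "x * u - ln (cosh u) \<le> cramer_nu (\<theta> * x)" for u
  proof (cases "u < 0")
    case True
    have "x * u \<le> 0" using True x0 by (simp add: mult_nonneg_nonpos)
    moreover have "0 \<le> ln (cosh u)" using cosh_real_ge_1[of u] by simp
    moreover have "0 \<le> cramer_nu (\<theta> * x)" using cramer_ge[of 0 "\<theta> * x"] by simp
    ultimately show ?thesis by linarith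
  next
    case False
    then have u0: "0 \<le> u" by simp
    define K where "K = cosh u"
    have K1: "1 \<le> K" unfolding K_def by (rule cosh_real_ge_1)
    have Ku: "1 + u\<^sup>2 / 2 \<le> K" unfolding K_def by (rule cosh_quad)
    have "\<exists>y. \<bar>y\<bar> < 1 \<and> - ln K \<le> ln (1 - y\<^sup>2) \<and> u - ln K \<le> \<theta> * y + ln (1 - y\<^sup>2)"
    proof (cases "c\<^sup>2 \<le> 1 - 1 / K")
      case True
      have A: "- ln K \<le> ln (1 - c\<^sup>2)"
      proof -
        have "1 / K \<le> 1 - c\<^sup>2" using True by simp
        then have "ln (1 / K) \<le> ln (1 - c\<^sup>2)" using K1 p0 by (subst ln_le_cancel_iff) auto
        then show ?thesis using K1 by (simp add: ln_div)
      qed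
      have B: "u - ln K \<le> ln 2"
      proof -
        have "exp u / 2 \<le> K" unfolding K_def cosh_field_def
          by (simp add: divide_right_mono)
        then have "ln (exp u / 2) \<le> ln K" using K1 by (subst ln_le_cancel_iff) auto
        then show ?thesis by (simp add: ln_div)
      qed
      show ?thesis using A B hmax c0 c1 by (intro exI[of _ c]) auto
    next
      case False
      define Y where "Y = sqrt (1 - 1 / K)"
      have Kp: "0 < K" using K1 by simp
      have nn: "0 \<le> 1 - 1 / K" using K1 by simp
      have Y0: "0 \<le> Y" unfolding Y_def using nn by simp
      have Y2: "Y\<^sup>2 = 1 - 1 / K" unfolding Y_def using nn by simp
      have Yc: "Y < c"
      proof -
        have "Y\<^sup>2 < c\<^sup>2" using False Y2 by simp
        show ?thesis
        proof (rule ccontr)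
          assume "\<not> Y < c"
          then have "c \<le> Y" by simp
          then have "c\<^sup>2 \<le> Y\<^sup>2" using c0 by (intro power_mono) auto
          then show False using \<open>Y\<^sup>2 < c\<^sup>2\<close> by linarith
        qed
      qed
      have Ylt: "\<bar>Y\<bar> < 1" using Y0 Yc c1 by simp
      have lY: "ln (1 - Y\<^sup>2) = - ln K" unfolding Y2 using Kp by (simp add: ln_div)
      have Kq: "K < q / 2"
      proof -
        have "2 / q < 1 / K" using False csq by simp
        then show ?thesis using Kp qpos by (simp add: field_simps)
      qed
      have uY: "u \<le> \<theta> * Y"
      proof -
        have "K * u\<^sup>2 \<le> q / 2 * u\<^sup>2" using Kq by (intro mult_right_mono) auto
        then have "u\<^sup>2 * K \<le> q / 2 * u\<^sup>2" by (simp add: mult.commute)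
        also have "\<dots> \<le> q * (q - 2) * (u\<^sup>2 / 2)"
        proof -
          have z: "0 \<le> q * u\<^sup>2 / 2" using qpos by simp
          have "(q * u\<^sup>2 / 2) * 1 \<le> (q * u\<^sup>2 / 2) * (q - 2)"
            using q3 by (intro mult_left_mono[OF _ z]) simp
          then show ?thesis by (simp add: algebra_simps)
        qed
        also have "\<dots> \<le> q * (q - 2) * (K - 1)"
        proof -
          have z: "0 \<le> q * (q - 2)" using q3 by simp
          have "u\<^sup>2 / 2 \<le> K - 1" using Ku by simp
          then show ?thesis by (rule mult_left_mono[OF _ z])
        qed
        finally have "u\<^sup>2 * K \<le> q * (q - 2) * (K - 1)" .
        then have "u\<^sup>2 \<le> q * (q - 2) * (K - 1) / K" using Kp by (simp add: le_divide_eq)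
        also have "\<dots> = (\<theta> * Y)\<^sup>2" unfolding power_mult_distrib Y2 th2 using Kp by (simp add: field_simps)
        finally have "u\<^sup>2 \<le> (\<theta> * Y)\<^sup>2" .
        then show ?thesis by (rule power2_le_imp_le) (use th Y0 in simp)
      qed
      show ?thesis using Ylt lY uY by (intro exI[of _ Y]) auto
    qed
    then obtain y where y: "\<bar>y\<bar> < 1" "- ln K \<le> ln (1 - y\<^sup>2)" "u - ln K \<le> \<theta> * y + ln (1 - y\<^sup>2)"
      by blast
    have "x * u - ln K = x * (u - ln K) + (1 - x) * (- ln K)" by (simp add: algebra_simps)
    also have "\<dots> \<le> x * (\<theta> * y + ln (1 - y\<^sup>2)) + (1 - x) * ln (1 - y\<^sup>2)"
      using y x0 x1 by (intro add_mono mult_left_mono) auto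
    also have "\<dots> = (\<theta> * x) * y + ln (1 - y\<^sup>2)" by (simp add: algebra_simps)
    also have "\<dots> \<le> cramer_nu (\<theta> * x)" by (rule cramer_ge[OF y(1)])
    finally show ?thesis unfolding K_def .
  qed
  have "lncosh_star x \<le> cramer_nu (\<theta> * x)"
    unfolding lncosh_star_def by (rule cSup_least) (auto intro: main)
  then show "cramer_nu (\<theta> * x) \<ge> lncosh_star x \<and>
           lncosh_star x = ((1 + x) * ln (1 + x) + (1 - x) * ln (1 - x)) / 2"
    using lncosh_star_eq[OF x0 x1] unfolding g_def by simp
qed

end
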